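(* Let $r\in\mathbb{Z}$, $s\in\mathbb{N}$ be coprime with $|r|<s$, let $\theta=\arccos(r/s)$, and let $k\in\mathbb{N}$ be squarefree. Let $E$ be the elliptic curve $y^2=x\bigl(x-(s-r)k\bigr)\bigl(x+(s+r)k\bigr)$ over $\mathbb{Q}$ associated with $(r,s,k)$. (i) If $k$ is odd and $E(\mathbb{Q})$ has a point of order $4$ or $8$, then $k=1$. (ii) If $k$ is even and $E(\mathbb{Q})$ has a point of order $4$ or $8$, then $k=2$. (iii) If $k$ is odd and $E(\mathbb{Q})$ has a point of order $3$ or $6$, then $k\in\{1,3\}$. (iv) If $k$ is even and $E(\mathbb{Q})$ has a point of order $3$ or $6$, then $k\in\{2,6\}$.
   Context: Given $\theta\in(0,\pi)$ with $\cos\theta=r/s$ in lowest terms, $k\in\mathbb{N}$ is $\theta$-congruent if there is a triangle with rational sides having angle $\theta$ and area $k\sqrt{s^2-r^2}$; this holds iff $E(\mathbb{Q})$ has a point of order $>2$, and $k$ is said to be $\theta$-congruent due to $N$-torsion when $E(\mathbb{Q})$ has a point of order $N$ (which then yields such a triangle). *)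

theory Defs
  imports Complex_Main "HOL-Computational_Algebra.Squarefree"
begin

datatype ecpt = Infty | Pt rat rat

definition on_curve :: "rat \<Rightarrow> rat \<Rightarrow> rat \<Rightarrow> ecpt \<Rightarrow> bool" where
  "on_curve a2 a4 a6 P = (case P of Infty \<Rightarrow> True
     | Pt x y \<Rightarrow> y^2 = x^3 + a2 * x^2 + a4 * x + a6)"

definition ec_add :: "rat \<Rightarrow> rat \<Rightarrow> ecpt \<Rightarrow> ecpt \<Rightarrow> ecpt" where
  "ec_add a2 a4 P Q = (case P of Infty \<Rightarrow> Q | Pt x1 y1 \<Rightarrow>
     (case Q of Infty \<Rightarrow> P | Pt x2 y2 \<Rightarrow>
       (if x1 = x2 \<and> y1 = - y2 then Infty
        else let l = (if x1 = x2 then (3 * x1^2 + 2 * a2 * x1 + a4) / (2 * y1)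
                      else (y2 - y1) / (x2 - x1));
                 x3 = l^2 - a2 - x1 - x2
             in Pt x3 (- (y1 + l * (x3 - x1))))))"

fun ec_mult :: "rat \<Rightarrow> rat \<Rightarrow> nat \<Rightarrow> ecpt \<Rightarrow> ecpt" where
  "ec_mult a2 a4 0 P = Infty"
| "ec_mult a2 a4 (Suc n) P = ec_add a2 a4 P (ec_mult a2 a4 n P)"

definition has_order :: "rat \<Rightarrow> rat \<Rightarrow> rat \<Rightarrow> ecpt \<Rightarrow> nat \<Rightarrow> bool" where
  "has_order a2 a4 a6 P N = (on_curve a2 a4 a6 P \<and> 0 < N \<and> ec_mult a2 a4 N P = Infty
     \<and> (\<forall>m. 0 < m \<and> m < N \<longrightarrow> ec_mult a2 a4 m P \<noteq> Infty))"

definition has_point_of_order :: "rat \<Rightarrow> rat \<Rightarrow> rat \<Rightarrow> nat \<Rightarrow> bool" where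
  "has_point_of_order a2 a4 a6 N = (\<exists>P. has_order a2 a4 a6 P N)"

text \<open>The curve y^2 = x (x - (s-r)k) (x + (s+r)k)
  = x^3 + 2rk x^2 - (s^2-r^2)k^2 x.\<close>
definition theta_curve_has_order :: "int \<Rightarrow> int \<Rightarrow> int \<Rightarrow> nat \<Rightarrow> bool" where
  "theta_curve_has_order r s k N =
     (let A = of_int ((s - r) * k) :: rat; B = of_int ((s + r) * k)
      in has_point_of_order (B - A) (- (A * B)) 0 N)"

end

theory Submission
  imports Defs "HOL-Computational_Algebra.Primes"
begin

definition sq :: "rat \<Rightarrow> bool" where "sq q = (\<exists>r. q = r^2)"

definition negp :: "ecpt \<Rightarrow> ecpt" where
  "negp P = (case P of Infty \<Rightarrow> Infty | Pt x y \<Rightarrow> Pt x (- y))"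

definition fe :: "rat \<Rightarrow> rat \<Rightarrow> rat \<Rightarrow> ecpt \<Rightarrow> rat" where
  "fe e e' e'' P = (case P of Infty \<Rightarrow> 1 | Pt x y \<Rightarrow> if x = e then (e-e')*(e-e'') else x - e)"

lemma sq_mult: "sq a \<Longrightarrow> sq b \<Longrightarrow> sq (a*b)"
  unfolding sq_def by (metis power_mult_distrib)

lemma sq_sq[simp]: "sq (a^2)" unfolding sq_def by blast
lemma sq_sqm[simp]: "sq (a*a)" unfolding sq_def by (metis power2_eq_square)

lemma sq_cancel: assumes "sq (a * b^2)" "b \<noteq> 0" shows "sq a"
proof -
  obtain r where "a * b^2 = r^2" using assms unfolding sq_def by blast
  then have "a = (r/b)^2" using assms(2) by (simp add: field_simps power2_eq_square)
  then show ?thesis unfolding sq_def by blast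
qed

lemma sq_div: assumes "sq (a*b*c)" "sq (b*d)" "b \<noteq> 0" shows "sq (c * a * d)"
proof -
  obtain r t where "a*b*c = r^2" "b*d = t^2" using assms unfolding sq_def by blast
  then have "c*a*d = (r*t/b)^2" using assms(3) by (simp add: field_simps power2_eq_square)
  then show ?thesis unfolding sq_def by blast
qed

locale ecurve =
  fixes a2 a4 a6 e1 e2 e3 :: rat
  assumes d12: "e1 \<noteq> e2" and d13: "e1 \<noteq> e3" and d23: "e2 \<noteq> e3"
    and ha2: "a2 = -(e1+e2+e3)" and ha4: "a4 = e1*e2+e1*e3+e2*e3" and ha6: "a6 = -(e1*e2*e3)"
begin

definition c :: "rat \<Rightarrow> rat" where "c x = (x-e1)*(x-e2)*(x-e3)"

definition lamf :: "rat \<Rightarrow> rat \<Rightarrow> rat \<Rightarrow> rat \<Rightarrow> rat" where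
  "lamf x1 y1 x2 y2 = (if x1 = x2 then (3 * x1^2 + 2 * a2 * x1 + a4) / (2 * y1)
                      else (y2 - y1) / (x2 - x1))"

lemma oc_Pt: "on_curve a2 a4 a6 (Pt x y) \<longleftrightarrow> y^2 = c x"
  unfolding on_curve_def c_def ha2 ha4 ha6 by (simp, algebra)

lemma add_Pt: "\<not>(x1 = x2 \<and> y1 = - y2) \<Longrightarrow>
  ec_add a2 a4 (Pt x1 y1) (Pt x2 y2) =
   Pt (lamf x1 y1 x2 y2 ^2 - a2 - x1 - x2) (- (y1 + lamf x1 y1 x2 y2 * ((lamf x1 y1 x2 y2 ^2 - a2 - x1 - x2) - x1)))"
  unfolding ec_add_def lamf_def Let_def by simp

lemma add_opp: "x1 = x2 \<and> y1 = - y2 \<Longrightarrow> ec_add a2 a4 (Pt x1 y1) (Pt x2 y2) = Infty"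
  unfolding ec_add_def by simp

lemma add_Infty1[simp]: "ec_add a2 a4 Infty Q = Q" unfolding ec_add_def by simp
lemma add_Infty2[simp]: "ec_add a2 a4 P Infty = P" unfolding ec_add_def by (cases P) simp_all

definition G :: "rat \<Rightarrow> rat \<Rightarrow> rat \<Rightarrow> rat \<Rightarrow> rat \<Rightarrow> rat" where
  "G l x1 y1 x2 x = c x - (l*(x-x1)+y1)^2 - (x-x1)*(x-x2)*(x-(l^2-a2-x1-x2))"

lemma G_lin: "G l x1 y1 x2 x = G l x1 y1 x2 0 + x * (G l x1 y1 x2 1 - G l x1 y1 x2 0)"
  unfolding G_def c_def unfolding ha2 by algebra

lemma line:
  assumes "y1^2 = c x1" "y2^2 = c x2" "\<not>(x1 = x2 \<and> y1 = - y2)"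
  shows "G (lamf x1 y1 x2 y2) x1 y1 x2 x = 0"
proof (cases "x1 = x2")
  case True
  then have "y1 = y2" using assms
    by (metis power2_eq_iff)
  then have y1: "y1 \<noteq> 0" using assms True by auto
  define l where "l = lamf x1 y1 x2 y2"
  have l: "l * (2*y1) = 3 * x1^2 + 2 * a2 * x1 + a4" using y1 True unfolding l_def lamf_def by simp
  have "G l x1 y1 x1 x = G l x1 y1 x1 x1 + (x - x1) * (3 * x1^2 + 2 * a2 * x1 + a4 - l*(2*y1))"
    unfolding G_def c_def unfolding ha2 ha4 by algebra
  also have "\<dots> = 0" unfolding l using assms(1) unfolding G_def by simp
  finally show ?thesis using True l_def by simp
next
  case False
  define l where "l = lamf x1 y1 x2 y2"
  have l: "l * (x2 - x1) = y2 - y1" using False unfolding l_def lamf_def by simp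
  have "G l x1 y1 x2 x * (x2 - x1) = G l x1 y1 x2 x1 * (x2 - x) + G l x1 y1 x2 x2 * (x - x1)"
    by (subst (1 2 3) G_lin) algebra
  also have "G l x1 y1 x2 x1 = 0" using assms(1) unfolding G_def by simp
  also have "G l x1 y1 x2 x2 = 0"
  proof -
    have "l*(x2-x1)+y1 = y2" using l by simp
    then show ?thesis using assms(2) unfolding G_def by simp
  qed
  finally show ?thesis using False l_def by simp
qed

lemma c_root: "c e1 = 0" "c e2 = 0" "c e3 = 0" unfolding c_def by simp_all

lemma c_zero: "c x = 0 \<Longrightarrow> x = e1 \<or> x = e2 \<or> x = e3" unfolding c_def by simp

lemma line': "y1^2 = c x1 \<Longrightarrow> y2^2 = c x2 \<Longrightarrow> \<not>(x1 = x2 \<and> y1 = - y2) \<Longrightarrow>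
   c x - (lamf x1 y1 x2 y2*(x-x1)+y1)^2 = (x-x1)*(x-x2)*(x-(lamf x1 y1 x2 y2^2-a2-x1-x2))"
  using line[of y1 x1 y2 x2 x] unfolding G_def by simp

lemma oc_add: "on_curve a2 a4 a6 P \<Longrightarrow> on_curve a2 a4 a6 Q \<Longrightarrow> on_curve a2 a4 a6 (ec_add a2 a4 P Q)"
proof (cases P; cases Q)
  fix x1 y1 x2 y2 assume P: "P = Pt x1 y1" and Q: "Q = Pt x2 y2"
    and h: "on_curve a2 a4 a6 P" "on_curve a2 a4 a6 Q"
  show ?thesis
  proof (cases "x1 = x2 \<and> y1 = - y2")
    case True then show ?thesis using P Q add_opp by (simp add: on_curve_def)
  next
    case False
    have "y1^2 = c x1" "y2^2 = c x2" using h P Q oc_Pt by auto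
    from line'[OF this False, of "lamf x1 y1 x2 y2 ^2 - a2 - x1 - x2"]
    show ?thesis using P Q False by (simp add: add_Pt oc_Pt power2_eq_square algebra_simps)
  qed
qed (auto simp: on_curve_def)

lemma negp_negp[simp]: "negp (negp P) = P" unfolding negp_def by (cases P) auto
lemma negp_Infty[simp]: "negp Infty = Infty" unfolding negp_def by simp
lemma negp_Pt[simp]: "negp (Pt x y) = Pt x (-y)" unfolding negp_def by simp
lemma oc_negp: "on_curve a2 a4 a6 (negp P) \<longleftrightarrow> on_curve a2 a4 a6 P"
  by (cases P) (auto simp: oc_Pt on_curve_def)
lemma add_negp: "ec_add a2 a4 P (negp P) = Infty"
  by (cases P) (auto simp: add_opp)

lemma third_not_opp:
  assumes y1: "y1 = 0" and e: "c x1 = 0" and ne: "x1 \<noteq> x2"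
    and L: "\<And>x. c x - (l*(x-x1)+y1)^2 = (x-x1)*(x-x2)*(x-x1)"
  shows False
proof -
  have key: "l^2 + e - x2 = 0" if "c e = 0" "e \<noteq> x1" for e
  proof -
    have "(e-x1)^2 * (l^2 + e - x2) = 0" using L[of e] that y1 by (simp add: power2_eq_square algebra_simps)
    then show ?thesis using that by simp
  qed
  from c_zero[OF e] show False
    using key[OF c_root(1)] key[OF c_root(2)] key[OF c_root(3)] d12 d13 d23 by auto
qed

lemma T3: assumes "on_curve a2 a4 a6 P" "on_curve a2 a4 a6 Q"
  shows "ec_add a2 a4 P (negp (ec_add a2 a4 P Q)) = negp Q"
proof (cases P; cases Q)
  fix x1 y1 x2 y2 assume P: "P = Pt x1 y1" and Q: "Q = Pt x2 y2"
  show ?thesis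
  proof (cases "x1 = x2 \<and> y1 = - y2")
    case True then show ?thesis using P Q add_opp by simp
  next
    case False
    have c1: "y1^2 = c x1" and c2: "y2^2 = c x2" using assms P Q oc_Pt by auto
    define l where "l = lamf x1 y1 x2 y2"
    define x3 where "x3 = l^2 - a2 - x1 - x2"
    define yR where "yR = y1 + l * (x3 - x1)"
    have L: "\<And>x. c x - (l*(x-x1)+y1)^2 = (x-x1)*(x-x2)*(x-x3)"
      using line'[OF c1 c2 False] unfolding l_def x3_def by simp
    have GL: "\<And>x. G l x1 y1 x2 x = 0" using line[OF c1 c2 False] l_def by simp
    have cR: "yR^2 = c x3" using L[of x3] unfolding yR_def by (simp add: algebra_simps)
    have eq: "negp (ec_add a2 a4 P Q) = Pt x3 yR"
      using P Q False by (simp add: add_Pt l_def[symmetric] x3_def[symmetric] yR_def)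
    have l12: "l*(x2-x1) = y2 - y1" if "x1 \<noteq> x2" using that unfolding l_def lamf_def by simp
    have t12: "y1 = y2" if "x1 = x2" using that False c1 c2 by (metis power2_eq_iff)
    have fin: "-(y1 + l*(x2-x1)) = - y2"
      using l12 t12 by (cases "x1 = x2") auto
    have x2eq: "l^2 - a2 - x1 - x3 = x2" unfolding x3_def by simp
    show ?thesis
    proof (cases "x1 = x3 \<and> y1 = - yR")
      case True
      then have "y1 = 0" unfolding yR_def by auto
      moreover have "x1 \<noteq> x2" using t12 \<open>y1 = 0\<close> False by auto
      moreover have "c x1 = 0" using c1 \<open>y1 = 0\<close> by simp
      ultimately show ?thesis using third_not_opp[of y1 x1 x2 l] L True by auto
    next
      case F2: False
      show ?thesis
      proof (cases "x1 = x3")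
        case True
        then have "yR = y1" using F2 cR c1 by (metis power2_eq_iff)
        then have y1: "y1 \<noteq> 0" using F2 True by auto
        have al: "3 * x1^2 + 2 * a2 * x1 + a4 - 2*l*y1 = (G l x1 y1 x2 1 - G l x1 y1 x2 0) + (x1-x2)*(x1-x3)"
          unfolding G_def c_def x3_def unfolding ha2 ha4 by algebra
        have "lamf x1 y1 x3 yR = l" using True y1 al GL unfolding lamf_def
          by (simp add: field_simps)
        then show ?thesis using eq True \<open>yR = y1\<close> F2 P Q x2eq fin
          by (simp add: add_Pt)
      next
        case False
        have "lamf x1 y1 x3 yR = (l*(x3-x1))/(x3-x1)" using False unfolding lamf_def yR_def by simp
        also have "\<dots> = l" using False by simp
        finally have "lamf x1 y1 x3 yR = l" .
        then show ?thesis using eq False P Q x2eq fin by (simp add: add_Pt)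
      qed
    qed
  qed
qed (auto simp: add_negp add_opp)

lemma cancel: assumes "on_curve a2 a4 a6 P" "on_curve a2 a4 a6 X" "on_curve a2 a4 a6 Y"
  "ec_add a2 a4 P X = ec_add a2 a4 P Y" shows "X = Y"
  using T3[OF assms(1,2)] T3[OF assms(1,3)] assms(4) by (metis negp_negp)

lemma oc_mult: "on_curve a2 a4 a6 P \<Longrightarrow> on_curve a2 a4 a6 (ec_mult a2 a4 n P)"
proof (induction n)
  case 0 then show ?case by (simp add: on_curve_def)
next
  case (Suc n) then show ?case using oc_add by simp
qed

lemma mult_neg: assumes "on_curve a2 a4 a6 P" "ec_mult a2 a4 N P = Infty" "j \<le> N"
  shows "ec_mult a2 a4 (N - j) P = negp (ec_mult a2 a4 j P)"
  using assms(3)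
proof (induction j)
  case 0 then show ?case using assms by simp
next
  case (Suc j)
  then have IH: "ec_mult a2 a4 (N - j) P = negp (ec_mult a2 a4 j P)" by simp
  have NS: "N - j = Suc (N - Suc j)" using Suc by simp
  have "ec_add a2 a4 P (ec_mult a2 a4 (N - Suc j) P) = ec_add a2 a4 P (negp (ec_mult a2 a4 (Suc j) P))"
    using IH NS T3[OF assms(1) oc_mult[OF assms(1), of j]] by simp
  then show ?case using cancel assms(1) oc_mult oc_negp by blast
qed


end

context ecurve begin

lemma fe_nz: "fe e1 e2 e3 P \<noteq> 0"
  unfolding fe_def using d12 d13 by (cases P) auto

lemma tor_rel: assumes c2: "y2^2 = c x2" and ly: "l*(x2-e1) = y2" and x2: "x2 \<noteq> e1"
  shows "(x2-e1)*((l^2 - a2 - e1 - x2)-e1) = (e1-e2)*(e1-e3)"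
proof -
  have "(x2-e1) * (l^2*(x2-e1) - (x2-e2)*(x2-e3)) = 0" using c2 ly unfolding c_def by algebra
  then have h: "l^2*(x2-e1) = (x2-e2)*(x2-e3)" using x2 by simp
  then show ?thesis unfolding ha2 by algebra
qed

lemma sq_one[simp]: "sq 1" unfolding sq_def by (rule exI[of _ 1]) simp

lemma fe_hom: assumes "on_curve a2 a4 a6 P" "on_curve a2 a4 a6 Q"
  shows "sq (fe e1 e2 e3 P * fe e1 e2 e3 Q * fe e1 e2 e3 (ec_add a2 a4 P Q))"
proof (cases P; cases Q)
  fix x1 y1 x2 y2 assume P: "P = Pt x1 y1" and Q: "Q = Pt x2 y2"
  define D where "D = (e1-e2)*(e1-e3)"
  have D: "D \<noteq> 0" unfolding D_def using d12 d13 by simp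
  show ?thesis
  proof (cases "x1 = x2 \<and> y1 = - y2")
    case True then show ?thesis using P Q add_opp by (simp add: fe_def)
  next
    case False
    have c1: "y1^2 = c x1" and c2: "y2^2 = c x2" using assms P Q oc_Pt by auto
    define l where "l = lamf x1 y1 x2 y2"
    define x3 where "x3 = l^2 - a2 - x1 - x2"
    have L: "\<And>x. c x - (l*(x-x1)+y1)^2 = (x-x1)*(x-x2)*(x-x3)"
      using line'[OF c1 c2 False] unfolding l_def x3_def by simp
    have R: "ec_add a2 a4 P Q = Pt x3 (- (y1 + l * (x3 - x1)))"
      using P Q False by (simp add: add_Pt l_def[symmetric] x3_def[symmetric])
    have Le: "(x1-e1)*(x2-e1)*(x3-e1) = (l*(e1-x1)+y1)^2"
    proof -
      have "c e1 - (l*(e1-x1)+y1)^2 = (e1-x1)*(e1-x2)*(e1-x3)" by (rule L)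
      then show ?thesis using c_root(1) by (simp add: algebra_simps)
    qed
    have l12: "l*(x2-x1) = y2 - y1" if "x1 \<noteq> x2" using that unfolding l_def lamf_def by simp
    show ?thesis
    proof (cases "x1 = e1")
      case True
      then have y1: "y1 = 0" using c1 c_root(1) by simp
      have x2: "x2 \<noteq> e1" using True y1 False c2 c_root(1) by auto
      have ly: "l*(x2-e1) = y2" using l12 x2 True y1 by auto
      have x3e: "x3 = l^2 - a2 - e1 - x2" using True unfolding x3_def by simp
      have E: "(x2-e1)*(x3-e1) = D" using tor_rel[OF c2 ly x2] unfolding x3e D_def .
      then have x3: "x3 \<noteq> e1" using D by auto
      have f1: "fe e1 e2 e3 P = D" using P True by (simp add: fe_def D_def)
      have f2: "fe e1 e2 e3 Q = x2 - e1" using Q x2 by (simp add: fe_def)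
      have f3: "fe e1 e2 e3 (ec_add a2 a4 P Q) = x3 - e1" using R x3 by (simp add: fe_def)
      have eqD: "D * (x2 - e1) * (x3 - e1) = D * D" using E by (metis mult.assoc)
      show ?thesis unfolding f1 f2 f3 eqD by simp
    next
      case x1: False
      show ?thesis
      proof (cases "x2 = e1")
        case True
        then have y2: "y2 = 0" using c2 c_root(1) by simp
        have ly: "l*(x1-e1) = y1" using l12 x1 True y2 by (auto simp: algebra_simps)
        have x3e: "x3 = l^2 - a2 - e1 - x1" using True unfolding x3_def by simp
        have E: "(x1-e1)*(x3-e1) = D" using tor_rel[OF c1 ly x1] unfolding x3e D_def .
        then have x3: "x3 \<noteq> e1" using D by auto
        have f1: "fe e1 e2 e3 Q = D" using Q True by (simp add: fe_def D_def)
        have f2: "fe e1 e2 e3 P = x1 - e1" using P x1 by (simp add: fe_def)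
        have f3: "fe e1 e2 e3 (ec_add a2 a4 P Q) = x3 - e1" using R x3 by (simp add: fe_def)
        have eqD: "(x1 - e1) * D * (x3 - e1) = D * D" using E by (metis mult.assoc mult.commute)
        show ?thesis unfolding f2 f1 f3 eqD by simp
      next
        case x2: False
        show ?thesis
        proof (cases "x3 = e1")
          case True
          then have "(l*(e1-x1)+y1)^2 = 0" using Le by simp
          then have "l*(e1-x1)+y1 = 0" by simp
          then have ly: "l*(x1-e1) = y1" by (simp add: right_diff_distrib)
          have x2e: "x2 = l^2 - a2 - e1 - x1" using True unfolding x3_def by simp
          have E: "(x1-e1)*(x2-e1) = D" using tor_rel[OF c1 ly x1] unfolding x2e[symmetric] D_def .
          have f1: "fe e1 e2 e3 (ec_add a2 a4 P Q) = D" using R True by (simp add: fe_def D_def)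
          have f2: "fe e1 e2 e3 P = x1 - e1" using P x1 by (simp add: fe_def)
          have f3: "fe e1 e2 e3 Q = x2 - e1" using Q x2 by (simp add: fe_def)
          show ?thesis unfolding f1 f2 f3 E by simp
        next
          case x3: False
          have f1: "fe e1 e2 e3 (ec_add a2 a4 P Q) = x3 - e1" using R x3 by (simp add: fe_def)
          have f2: "fe e1 e2 e3 P = x1 - e1" using P x1 by (simp add: fe_def)
          have f3: "fe e1 e2 e3 Q = x2 - e1" using Q x2 by (simp add: fe_def)
          show ?thesis unfolding f1 f2 f3 Le by simp
        qed
      qed
    qed
  qed
qed (auto simp: fe_def)

lemma fe_mult: assumes "on_curve a2 a4 a6 P"
  shows "sq (fe e1 e2 e3 (ec_mult a2 a4 n P) * fe e1 e2 e3 P ^ n)"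
proof (induction n)
  case 0 then show ?case by (simp add: fe_def)
next
  case (Suc n)
  from sq_div[OF fe_hom[OF assms oc_mult[OF assms, of n]] Suc fe_nz]
  show ?case by (simp add: algebra_simps)
qed

lemma fe_even: assumes "on_curve a2 a4 a6 P"
  shows "sq (fe e1 e2 e3 (ec_mult a2 a4 (2*m) P))"
proof -
  have e: "fe e1 e2 e3 P ^ (2*m) = (fe e1 e2 e3 P ^ m)^2" by (metis power_mult mult.commute)
  show ?thesis using fe_mult[OF assms, of "2*m"] sq_cancel[of _ "fe e1 e2 e3 P ^ m"] fe_nz
    unfolding e by simp
qed

end

definition rr :: "rat \<Rightarrow> rat \<Rightarrow> rat \<Rightarrow> rat \<Rightarrow> rat \<Rightarrow> rat" where
  "rr x y e e' e'' = ((x-e)^2 - (e-e')*(e-e''))/(2*y)"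

context ecurve begin

lemma dbl_id1: "(3*x^2 + 2*a2*x + a4)^2 - 4*(a2 + 2*x + e1) * c x = ((x-e1)^2 - (e1-e2)*(e1-e3))^2"
  unfolding c_def ha2 ha4 by algebra

lemma dbl_id2: "4 * c x * (3*x + a2) - (3*x^2 + 2*a2*x + a4)^2 =
   ((x-e1)^2 - (e1-e2)*(e1-e3))*((x-e2)^2 - (e2-e1)*(e2-e3))
 + ((x-e1)^2 - (e1-e2)*(e1-e3))*((x-e3)^2 - (e3-e1)*(e3-e2))
 + ((x-e2)^2 - (e2-e1)*(e2-e3))*((x-e3)^2 - (e3-e1)*(e3-e2))"
  unfolding c_def ha2 ha4 by algebra

lemma dbl_Pt: assumes "y \<noteq> 0"
  shows "ec_add a2 a4 (Pt x y) (Pt x y) = Pt (((3*x^2 + 2*a2*x + a4)/(2*y))^2 - a2 - x - x)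
     (- (y + ((3*x^2 + 2*a2*x + a4)/(2*y)) * ((((3*x^2 + 2*a2*x + a4)/(2*y))^2 - a2 - x - x) - x)))"
  using assms add_Pt[of x x y y] by (simp add: lamf_def)

lemma dbl_x1: assumes "y \<noteq> 0" "y^2 = c x"
  shows "((3*x^2 + 2*a2*x + a4)/(2*y))^2 - a2 - x - x - e1 = (rr x y e1 e2 e3)^2"
proof -
  define L where "L = 3*x^2 + 2*a2*x + a4"
  define N where "N = (x-e1)^2 - (e1-e2)*(e1-e3)"
  have k: "L^2 - 4*(a2 + 2*x + e1) * y^2 = N^2" using dbl_id1[of x] assms(2) unfolding L_def N_def by simp
  have "(L/(2*y))^2 - a2 - x - x - e1 = (L^2 - 4*(a2 + 2*x + e1) * y^2)/(4*y^2)"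
    using assms(1) by (simp add: field_simps power2_eq_square)
  also have "\<dots> = (N/(2*y))^2" unfolding k using assms(1) by (simp add: field_simps power2_eq_square)
  finally show ?thesis unfolding rr_def L_def N_def .
qed

lemma dbl_x2: assumes "y \<noteq> 0" "y^2 = c x"
  shows "x = (((3*x^2 + 2*a2*x + a4)/(2*y))^2 - a2 - x - x)
    + rr x y e1 e2 e3 * rr x y e2 e1 e3 + rr x y e1 e2 e3 * rr x y e3 e1 e2 + rr x y e2 e1 e3 * rr x y e3 e1 e2"
proof -
  define L where "L = 3*x^2 + 2*a2*x + a4"
  define N1 where "N1 = (x-e1)^2 - (e1-e2)*(e1-e3)"
  define N2 where "N2 = (x-e2)^2 - (e2-e1)*(e2-e3)"
  define N3 where "N3 = (x-e3)^2 - (e3-e1)*(e3-e2)"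
  have k: "4 * y^2 * (3*x + a2) - L^2 = N1*N2 + N1*N3 + N2*N3"
    using dbl_id2[of x] assms(2) unfolding L_def N1_def N2_def N3_def by simp
  have "x - ((L/(2*y))^2 - a2 - x - x) = (4 * y^2 * (3*x + a2) - L^2)/(4*y^2)"
    using assms(1) by (simp add: field_simps power2_eq_square)
  also have "\<dots> = (N1/(2*y))*(N2/(2*y)) + (N1/(2*y))*(N3/(2*y)) + (N2/(2*y))*(N3/(2*y))"
    unfolding k using assms(1) by (simp add: field_simps power2_eq_square)
  finally show ?thesis unfolding rr_def L_def N1_def N2_def N3_def by simp
qed


lemma dbl_x1': assumes "y \<noteq> 0" "y^2 = c x"
  shows "((3*x^2 + 2*a2*x + a4)/(2*y))^2 - a2 - x - x - e1 = ((x-e1)^2 - (e1-e2)*(e1-e3))^2 / (4 * c x)"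
  using dbl_x1[OF assms] assms unfolding rr_def by (simp add: power_divide power_mult_distrib)

lemma trans_key:
  fixes s t p q :: rat
  assumes st: "s*t = p*q" and nz: "t \<noteq> 0" "s \<noteq> 0" "t+p \<noteq> 0" "t+q \<noteq> 0" "s+p \<noteq> 0" "s+q \<noteq> 0"
  shows "(s^2 - p*q)^2 / (4*(s*(s+p)*(s+q))) = (t^2 - p*q)^2 / (4*(t*(t+p)*(t+q)))"
proof -
  have "(s^2 - p*q)^2 * (4*(t*(t+p)*(t+q))) = (t^2 - p*q)^2 * (4*(s*(s+p)*(s+q)))"
    using st by algebra
  then show ?thesis using nz by (simp add: frac_eq_eq)
qed

lemma translate:
  assumes c1: "y^2 = c x" and y: "y \<noteq> 0" and x: "x \<noteq> e1"
    and R: "ec_add a2 a4 (Pt x y) (Pt e1 0) = Pt xR yR" and yR: "yR \<noteq> 0"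
  shows "\<exists>y1 y2. ec_add a2 a4 (Pt xR yR) (Pt xR yR) = Pt (((3*x^2 + 2*a2*x + a4)/(2*y))^2 - a2 - x - x) y2"
proof -
  define l where "l = lamf x y e1 0"
  have ly: "l * (x - e1) = y" using x unfolding l_def lamf_def by (simp add: field_simps)
  have xR: "xR = l^2 - a2 - x - e1" using R x by (simp add: add_Pt l_def)
  have D: "(x-e1)*((l^2 - a2 - e1 - x) - e1) = (e1-e2)*(e1-e3)" by (rule tor_rel[OF c1 ly x])
  have e: "l^2 - a2 - e1 - x = xR" using xR by simp
  have "(x-e1)*(xR - e1) = (e1-e2)*(e1-e3)" using D unfolding e .
  then have st: "(xR - e1)*(x - e1) = (e1-e2)*(e1-e3)" by (simp add: mult.commute)
  have ocR: "on_curve a2 a4 a6 (Pt xR yR)"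
    using oc_add[of "Pt x y" "Pt e1 0"] R c1 c_root(1) by (simp add: oc_Pt)
  then have cR: "yR^2 = c xR" by (simp add: oc_Pt)
  have cx: "c x = (x-e1)*((x-e1)+(e1-e2))*((x-e1)+(e1-e3))" unfolding c_def by simp
  have cxR: "c xR = (xR-e1)*((xR-e1)+(e1-e2))*((xR-e1)+(e1-e3))" unfolding c_def by simp
  have nz1: "c x \<noteq> 0" using c1 y by auto
  have nz2: "c xR \<noteq> 0" using cR yR by auto
  have eq: "((xR-e1)^2 - (e1-e2)*(e1-e3))^2 / (4 * c xR) = ((x-e1)^2 - (e1-e2)*(e1-e3))^2 / (4 * c x)"
    unfolding cx cxR
    apply (rule trans_key[OF st])
    using nz1 nz2 unfolding cx cxR by auto
  have A: "((3*xR^2 + 2*a2*xR + a4)/(2*yR))^2 - a2 - xR - xR = ((3*x^2 + 2*a2*x + a4)/(2*y))^2 - a2 - x - x"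
    using dbl_x1'[OF yR cR] dbl_x1'[OF y c1] eq by simp
  show ?thesis using dbl_Pt[OF yR] A by simp
qed

end

lemma ecurve_perm2: "ecurve a2 a4 a6 e1 e2 e3 \<Longrightarrow> ecurve a2 a4 a6 e2 e1 e3"
  unfolding ecurve_def by (auto simp: algebra_simps)
lemma ecurve_perm3: "ecurve a2 a4 a6 e1 e2 e3 \<Longrightarrow> ecurve a2 a4 a6 e3 e1 e2"
  unfolding ecurve_def by (auto simp: algebra_simps)

context ecurve begin

lemma translate':
  assumes oc: "on_curve a2 a4 a6 (Pt x y)" and y: "y \<noteq> 0" and x: "x \<noteq> e1"
    and R: "ec_add a2 a4 (Pt x y) (Pt e1 0) = Pt xR yR" and yR: "yR \<noteq> 0"
  shows "\<exists>y2. ec_add a2 a4 (Pt xR yR) (Pt xR yR) = Pt (((3*x^2 + 2*a2*x + a4)/(2*y))^2 - a2 - x - x) y2"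
  using translate[of y x xR yR] oc y x R yR by (simp add: oc_Pt)

lemma ec_mult1[simp]: "ec_mult a2 a4 1 P = P" by simp
lemma ec_mult2: "ec_mult a2 a4 2 P = ec_add a2 a4 P P" by (simp add: numeral_eq_Suc)
lemma ec_mult3: "ec_mult a2 a4 3 P = ec_add a2 a4 P (ec_add a2 a4 P P)" by (simp add: numeral_eq_Suc)

lemma two_tors: assumes "on_curve a2 a4 a6 X" "X = negp X" "X \<noteq> Infty"
  shows "\<exists>t. X = Pt t 0 \<and> (t = e1 \<or> t = e2 \<or> t = e3)"
proof (cases X)
  case (Pt t yt)
  then have "yt = 0" using assms(2) by simp
  then have "c t = 0" using assms(1) Pt oc_Pt by simp
  then show ?thesis using Pt \<open>yt = 0\<close> c_zero by blast
qed (use assms in auto)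

lemma ord4k: assumes h: "has_order a2 a4 a6 P (4*k)" and k: "k > 0"
  shows "\<exists>t. (t = e1 \<or> t = e2 \<or> t = e3) \<and> sq (fe e1 e2 e3 (Pt t 0)) \<and> sq (fe e2 e1 e3 (Pt t 0))
          \<and> sq (fe e3 e1 e2 (Pt t 0))"
proof -
  have oc: "on_curve a2 a4 a6 P" and z: "ec_mult a2 a4 (4*k) P = Infty"
    and nz: "\<And>m. 0 < m \<Longrightarrow> m < 4*k \<Longrightarrow> ec_mult a2 a4 m P \<noteq> Infty"
    using h unfolding has_order_def by auto
  have "ec_mult a2 a4 (4*k - 2*k) P = negp (ec_mult a2 a4 (2*k) P)" by (rule mult_neg[OF oc z]) simp
  then have e: "ec_mult a2 a4 (2*k) P = negp (ec_mult a2 a4 (2*k) P)" by (simp add: mult_2)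
  have n: "ec_mult a2 a4 (2*k) P \<noteq> Infty" using nz[of "2*k"] k by simp
  obtain t where T: "ec_mult a2 a4 (2*k) P = Pt t 0" "t = e1 \<or> t = e2 \<or> t = e3"
    using two_tors[OF oc_mult[OF oc] e n] by blast
  have s1: "sq (fe e1 e2 e3 (Pt t 0))" using fe_even[OF oc, of k] T by simp
  have s2: "sq (fe e2 e1 e3 (Pt t 0))"
    using ecurve.fe_even[OF ecurve_perm2[OF ecurve_axioms] oc, of k] T by simp
  have s3: "sq (fe e3 e1 e2 (Pt t 0))"
    using ecurve.fe_even[OF ecurve_perm3[OF ecurve_axioms] oc, of k] T by simp
  show ?thesis using T s1 s2 s3 by blast
qed

lemma flex:
  assumes oc: "on_curve a2 a4 a6 (Pt x y)" and y: "y \<noteq> 0"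
    and d: "ec_add a2 a4 (Pt x y) (Pt x y) = Pt x y'"
  shows "\<exists>u v w. x - e1 = u^2 \<and> x - e2 = v^2 \<and> x - e3 = w^2 \<and> u*v + u*w + v*w = 0"
proof -
  have X: "((3*x^2 + 2*a2*x + a4)/(2*y))^2 - a2 - x - x = x" using d dbl_Pt[OF y] by simp
  have c1: "y^2 = c x" using oc oc_Pt by simp
  interpret E2: ecurve a2 a4 a6 e2 e1 e3 by (rule ecurve_perm2[OF ecurve_axioms])
  interpret E3: ecurve a2 a4 a6 e3 e1 e2 by (rule ecurve_perm3[OF ecurve_axioms])
  have c2: "y^2 = E2.c x" using oc E2.oc_Pt by simp
  have c3: "y^2 = E3.c x" using oc E3.oc_Pt by simp
  have "x - e1 = (rr x y e1 e2 e3)^2" using dbl_x1[OF y c1] X by simp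
  moreover have "x - e2 = (rr x y e2 e1 e3)^2" using E2.dbl_x1[OF y c2] X by simp
  moreover have "x - e3 = (rr x y e3 e1 e2)^2" using E3.dbl_x1[OF y c3] X by simp
  moreover have "rr x y e1 e2 e3 * rr x y e2 e1 e3 + rr x y e1 e2 e3 * rr x y e3 e1 e2 + rr x y e2 e1 e3 * rr x y e3 e1 e2 = 0"
    using dbl_x2[OF y c1] X by simp
  ultimately show ?thesis by blast
qed

lemma ord3: assumes h: "has_order a2 a4 a6 P 3"
  shows "\<exists>x u v w. x - e1 = u^2 \<and> x - e2 = v^2 \<and> x - e3 = w^2 \<and> u*v + u*w + v*w = 0"
proof -
  have oc: "on_curve a2 a4 a6 P" and z: "ec_mult a2 a4 3 P = Infty"
    and nz: "\<And>m. 0 < m \<Longrightarrow> m < 3 \<Longrightarrow> ec_mult a2 a4 m P \<noteq> Infty"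
    using h unfolding has_order_def by auto
  have "ec_mult a2 a4 (3 - 1) P = negp (ec_mult a2 a4 1 P)" by (rule mult_neg[OF oc z]) simp
  then have e: "ec_add a2 a4 P P = negp P" using ec_mult2 by simp
  have "P \<noteq> Infty" using nz[of 1] by simp
  then obtain x y where P: "P = Pt x y" by (cases P) auto
  have y: "y \<noteq> 0" using e P add_opp[of x x y y] by auto
  have ocP: "on_curve a2 a4 a6 (Pt x y)" using oc P by simp
  have d: "ec_add a2 a4 (Pt x y) (Pt x y) = Pt x (-y)" using e P by simp
  from flex[OF ocP y d] show ?thesis by blast
qed

lemma ord6: assumes h: "has_order a2 a4 a6 P 6"
  shows "\<exists>x u v w. x - e1 = u^2 \<and> x - e2 = v^2 \<and> x - e3 = w^2 \<and> u*v + u*w + v*w = 0"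
proof -
  have oc: "on_curve a2 a4 a6 P" and z: "ec_mult a2 a4 6 P = Infty"
    and nz: "\<And>m. 0 < m \<Longrightarrow> m < 6 \<Longrightarrow> ec_mult a2 a4 m P \<noteq> Infty"
    using h unfolding has_order_def by auto
  have "P \<noteq> Infty" using nz[of 1] by simp
  then obtain x y where P: "P = Pt x y" by (cases P) auto
  have Q: "ec_add a2 a4 P P \<noteq> Infty" using nz[of 2] ec_mult2 by simp
  then have y: "y \<noteq> 0" using P add_opp[of x x y y] by auto
  define X2 where "X2 = ((3*x^2 + 2*a2*x + a4)/(2*y))^2 - a2 - x - x"
  obtain Y2 where Q2: "ec_add a2 a4 P P = Pt X2 Y2" using dbl_Pt[OF y] P X2_def by simp
  have "ec_mult a2 a4 (6 - 3) P = negp (ec_mult a2 a4 3 P)" by (rule mult_neg[OF oc z]) simp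
  then have e3: "ec_mult a2 a4 3 P = negp (ec_mult a2 a4 3 P)" by simp
  have n3: "ec_mult a2 a4 3 P \<noteq> Infty" using nz[of 3] by simp
  obtain t where T: "ec_mult a2 a4 3 P = Pt t 0" "t = e1 \<or> t = e2 \<or> t = e3"
    using two_tors[OF oc_mult[OF oc] e3 n3] by blast
  have T': "ec_add a2 a4 P (ec_add a2 a4 P P) = Pt t 0" using T ec_mult3 by simp
  have R: "ec_add a2 a4 P (Pt t 0) = Pt X2 (- Y2)"
    using T3[OF oc oc_add[OF oc oc]] T' Q2 by simp
  have Y2: "Y2 \<noteq> 0"
  proof
    assume "Y2 = 0"
    then have "ec_add a2 a4 P P = negp (ec_add a2 a4 P P)" using Q2 by simp
    then have "ec_add a2 a4 P (ec_add a2 a4 P P) = negp P" using T3[OF oc oc] by metis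
    then show False using T' P y by simp
  qed
  have xt: "x \<noteq> t"
  proof
    assume "x = t"
    have "c t = 0" using T(2) c_root by auto
    then show False using oc P \<open>x = t\<close> y oc_Pt by simp
  qed
  have ocP: "on_curve a2 a4 a6 (Pt x y)" using oc P by simp
  have "\<exists>y2. ec_add a2 a4 (Pt X2 (-Y2)) (Pt X2 (-Y2)) = Pt X2 y2"
  proof -
    have R': "ec_add a2 a4 (Pt x y) (Pt t 0) = Pt X2 (- Y2)" using R P by simp
    from T(2) show ?thesis
    proof (elim disjE)
      assume "t = e1" then show ?thesis using translate'[OF ocP y _ _ ] R' xt Y2 X2_def by simp
    next
      assume t: "t = e2"
      interpret E2: ecurve a2 a4 a6 e2 e1 e3 by (rule ecurve_perm2[OF ecurve_axioms])
      show ?thesis using E2.translate'[OF ocP y _ _ ] R' xt Y2 X2_def t by simp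
    next
      assume t: "t = e3"
      interpret E3: ecurve a2 a4 a6 e3 e1 e2 by (rule ecurve_perm3[OF ecurve_axioms])
      show ?thesis using E3.translate'[OF ocP y _ _ ] R' xt Y2 X2_def t by simp
    qed
  qed
  then obtain y2 where d: "ec_add a2 a4 (Pt X2 (-Y2)) (Pt X2 (-Y2)) = Pt X2 y2" by blast
  have ocR: "on_curve a2 a4 a6 (Pt X2 (-Y2))" using oc_add[OF oc, of "Pt t 0"] R T oc_mult[OF oc, of 3] by simp
  show ?thesis using flex[OF ocR _ d] Y2 by auto
qed

end

lemma sq_int_even:
  fixes z p :: int
  assumes p: "prime p" and z: "z \<noteq> 0" and s: "sq (of_int z)"
  shows "even (multiplicity p z)"
proof -
  obtain q where q: "(of_int z :: rat) = q^2" using s unfolding sq_def by blast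
  obtain a b where ab: "q = Fract a b" "b > 0" by (cases q) auto
  have "(of_int z :: rat) * of_int b ^ 2 = of_int a ^ 2"
    using q ab by (simp add: Fract_of_int_quotient power_divide)
  then have e: "z * b^2 = a^2" by (metis of_int_eq_iff of_int_mult of_int_power)
  have a: "a \<noteq> 0" using e z ab(2) by auto
  have pe: "prime_elem p" using p by (rule prime_imp_prime_elem)
  have b0: "b \<noteq> 0" "b^2 \<noteq> 0" using ab(2) by auto
  have "multiplicity p (z * b^2) = multiplicity p z + 2 * multiplicity p b"
    using prime_elem_multiplicity_mult_distrib[OF pe z b0(2)] prime_elem_multiplicity_power_distrib[OF pe b0(1), of 2] by simp
  moreover have "multiplicity p (a^2) = 2 * multiplicity p a"
    using prime_elem_multiplicity_power_distrib[OF pe a, of 2] by simp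
  ultimately have "multiplicity p z + 2 * multiplicity p b = 2 * multiplicity p a" using e by simp
  then show ?thesis by presburger
qed

lemma mult_one:
  fixes p k :: int
  assumes "prime p" "p dvd k" "\<not> p^2 dvd k" "k \<noteq> 0"
  shows "multiplicity p k = 1"
proof -
  have "p > 1" using assms(1) prime_gt_1_int by blast
  then have "1 \<le> multiplicity p k" using assms power_dvd_iff_le_multiplicity[where p=p and n=1 and x=k] by simp
  moreover have "\<not> 2 \<le> multiplicity p k" using assms \<open>p > 1\<close> power_dvd_iff_le_multiplicity[where p=p and n=2 and x=k] by simp
  ultimately show ?thesis by simp
qed

lemma key_odd:
  fixes p a k W :: int
  assumes p: "prime p" and pk: "p dvd k" "\<not> p^2 dvd k" and pa: "\<not> p dvd a"
    and nz: "a \<noteq> 0" "k \<noteq> 0" "W \<noteq> 0" and s: "sq (of_int (a * k * W))"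
  shows "p dvd W"
proof (rule ccontr)
  assume pW: "\<not> p dvd W"
  have pe: "prime_elem p" using p by (rule prime_imp_prime_elem)
  have ak: "a * k \<noteq> 0" using nz by simp
  have "multiplicity p (a * k * W) = multiplicity p a + multiplicity p k + multiplicity p W"
    using prime_elem_multiplicity_mult_distrib[OF pe ak nz(3)] prime_elem_multiplicity_mult_distrib[OF pe nz(1,2)] by simp
  also have "\<dots> = 1" using mult_one[OF p pk nz(2)] pa pW by (simp add: not_dvd_imp_multiplicity_0)
  finally have "multiplicity p (a * k * W) = 1" .
  moreover have "even (multiplicity p (a * k * W))" using sq_int_even[OF p _ s] nz by simp
  ultimately show False by simp
qed

lemma cop_both:
  fixes p m n :: int
  assumes "prime p" "coprime m n" "p dvd m" "p dvd n" shows False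
  using assms by (meson coprime_common_divisor not_prime_unit)

lemma three:
  fixes p m n :: int
  assumes p: "prime p" and c: "coprime m n" and "p dvd 3*m" "p dvd 3*n"
  shows "p = 3"
proof (rule ccontr)
  assume "p \<noteq> 3"
  then have "\<not> p dvd 3" using primes_dvd_imp_eq[OF p, of 3] by auto
  then have "p dvd m" "p dvd n" using assms p prime_dvd_mult_iff by blast+
  then show False using cop_both[OF p c] by blast
qed

lemma L23:
  fixes p m n :: int
  assumes p: "prime p" and c: "coprime m n" and h1: "p dvd m*(m+2*n)" and h2: "p dvd n*(2*m+n)"
  shows "p = 3"
proof -
  from h1 p have A: "p dvd m \<or> p dvd m+2*n" by (simp add: prime_dvd_mult_iff)
  from h2 p have B: "p dvd n \<or> p dvd 2*m+n" by (simp add: prime_dvd_mult_iff)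
  show ?thesis
  proof (cases "p dvd m")
    case True
    then have "p dvd n" using B by (metis add_diff_cancel_left' dvd_diff dvd_mult)
    then show ?thesis using cop_both[OF p c True] by blast
  next
    case False
    then have m2: "p dvd m+2*n" using A by blast
    show ?thesis
    proof (cases "p dvd n")
      case True
      then have "p dvd m" using m2 by (metis add_diff_cancel_right' dvd_diff dvd_mult)
      then show ?thesis using False by blast
    next
      case nF: False
      then have n2: "p dvd 2*m+n" using B by blast
      have "3*m = 2*(2*m+n) - (m+2*n)" "3*n = 2*(m+2*n) - (2*m+n)" by algebra+
      then have "p dvd 3*m" "p dvd 3*n" using m2 n2 by (metis dvd_diff dvd_mult)+
      then show ?thesis using three[OF p c] by blast
    qed
  qed
qed

lemma L13:
  fixes p m n :: int
  assumes p: "prime p" and c: "coprime m n" and h1: "p dvd (m-n)*(m+n)" and h2: "p dvd n*(2*m+n)"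
  shows "p = 3"
proof -
  from h1 p have A: "p dvd m-n \<or> p dvd m+n" by (simp add: prime_dvd_mult_iff)
  from h2 p have B: "p dvd n \<or> p dvd 2*m+n" by (simp add: prime_dvd_mult_iff)
  show ?thesis
  proof (cases "p dvd n")
    case True
    have "m = (m-n) + n" "m = (m+n) - n" by algebra+
    then have "p dvd m" using A True by (metis dvd_add dvd_diff)
    then show ?thesis using cop_both[OF p c _ True] by blast
  next
    case False
    then have n2: "p dvd 2*m+n" using B by blast
    show ?thesis
    proof (cases "p dvd m-n")
      case True
      have "3*m = (2*m+n) + (m-n)" "3*n = (2*m+n) - 2*(m-n)" by algebra+
      then have "p dvd 3*m" "p dvd 3*n" using True n2 by (metis dvd_add dvd_diff dvd_mult)+
      then show ?thesis using three[OF p c] by blast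
    next
      case F2: False
      then have mn: "p dvd m+n" using A by blast
      have "m = (2*m+n) - (m+n)" by algebra
      then have pm: "p dvd m" using mn n2 by (metis dvd_diff)
      have "n = (m+n) - m" by algebra
      then have "p dvd n" using mn pm by (metis dvd_diff)
      then show ?thesis using False by blast
    qed
  qed
qed

lemma L12:
  fixes p m n :: int
  assumes p: "prime p" and c: "coprime m n" and h1: "p dvd (m-n)*(m+n)" and h2: "p dvd m*(m+2*n)"
  shows "p = 3"
proof -
  from h1 p have A: "p dvd m-n \<or> p dvd m+n" by (simp add: prime_dvd_mult_iff)
  from h2 p have B: "p dvd m \<or> p dvd m+2*n" by (simp add: prime_dvd_mult_iff)
  show ?thesis
  proof (cases "p dvd m")
    case True
    have "n = m - (m-n)" "n = (m+n) - m" by algebra+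
    then have "p dvd n" using A True by (metis dvd_diff)
    then show ?thesis using cop_both[OF p c True] by blast
  next
    case False
    then have m2: "p dvd m+2*n" using B by blast
    show ?thesis
    proof (cases "p dvd m-n")
      case True
      have "3*m = (m+2*n) + 2*(m-n)" "3*n = (m+2*n) - (m-n)" by algebra+
      then have "p dvd 3*m" "p dvd 3*n" using True m2 by (metis dvd_add dvd_diff dvd_mult)+
      then show ?thesis using three[OF p c] by blast
    next
      case F2: False
      then have mn: "p dvd m+n" using A by blast
      have "n = (m+2*n) - (m+n)" by algebra
      then have pn: "p dvd n" using mn m2 by (metis dvd_diff)
      have "m = (m+n) - n" by algebra
      then have "p dvd m" using mn pn by (metis dvd_diff)
      then show ?thesis using False by blast
    qed
  qed
qed

lemma sqf_dvd6:
  fixes k :: nat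
  assumes k: "k > 0" and sf: "squarefree k"
    and P: "\<And>p::int. prime p \<Longrightarrow> p dvd int k \<Longrightarrow> p = 2 \<or> p = 3"
  shows "k dvd 6"
proof (rule multiplicity_le_imp_dvd)
  show "k \<noteq> 0" using k by simp
  fix q :: nat assume q: "prime q"
  show "multiplicity q k \<le> multiplicity q 6"
  proof (cases "q dvd k")
    case False then show ?thesis by (simp add: not_dvd_imp_multiplicity_0)
  next
    case True
    have "int q dvd int k" using True by simp
    then have q23: "q = 2 \<or> q = 3" using P[of "int q"] q by auto
    have le1: "multiplicity q k \<le> 1" using sf k q squarefree_factorial_semiring''[of k] by auto
    have m6: "multiplicity q (6::nat) = multiplicity q 2 + multiplicity q 3"
      using q prime_elem_multiplicity_mult_distrib[of q "2::nat" 3] by simp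
    have "multiplicity q (6::nat) \<ge> 1"
      using q23 m6 multiplicity_self[of "2::nat"] multiplicity_self[of "3::nat"] by auto
    then show ?thesis using le1 by simp
  qed
qed

lemma dvd6_cases: "(k::nat) dvd 6 \<Longrightarrow> k = 1 \<or> k = 2 \<or> k = 3 \<or> k = 6"
proof -
  assume h: "k dvd 6"
  then have "k \<le> 6" by (simp add: dvd_imp_le)
  then have "k = 0 \<or> k = 1 \<or> k = 2 \<or> k = 3 \<or> k = 4 \<or> k = 5 \<or> k = 6" by arith
  then show ?thesis using h by auto
qed


lemma rat_part:
  fixes A B u v w l M N :: rat
  assumes hA: "A = u^2 - v^2" and hB: "B = w^2 - u^2" and h: "u*v + u*w + v*w = 0"
    and uM: "u = l*M" and vN: "v = l*N" and l: "l \<noteq> 0" and MN: "M + N \<noteq> 0"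
    and A0: "A \<noteq> 0" and B0: "B \<noteq> 0" and AB0: "A + B \<noteq> 0"
  shows "sq (A*((M-N)*(M+N))) \<and> sq (B*(-(M*(M+2*N)))) \<and> sq ((A+B)*(-(N*(2*M+N))))
     \<and> (M-N)*(M+N) \<noteq> 0 \<and> M*(M+2*N) \<noteq> 0 \<and> N*(2*M+N) \<noteq> 0"
proof -
  have eA: "A = l^2 * ((M-N)*(M+N))" using hA uM vN by algebra
  have e1: "(A*((M-N)*(M+N))) * l^2 = A^2" using eA by algebra
  have s1: "sq (A*((M-N)*(M+N)))" using sq_cancel[of "A*((M-N)*(M+N))" l] e1 l by simp
  have "l^2 * (B*(M+N)^2 + l^2*M^3*(M+2*N)) = 0" using hB h uM vN by algebra
  then have eB: "B*(M+N)^2 = - (l^2*M^3*(M+2*N))" using l by simp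
  have e2: "(B*(-(M*(M+2*N)))) * (M+N)^2 = (l*M^2*(M+2*N))^2" using eB by algebra
  have s2: "sq (B*(-(M*(M+2*N))))" using sq_cancel[of "B*(-(M*(M+2*N)))" "M+N"] e2 MN by simp
  have "l^2 * ((A+B)*(M+N)^2 + l^2*N^3*(2*M+N)) = 0" using hA hB h uM vN by algebra
  then have eC: "(A+B)*(M+N)^2 = - (l^2*N^3*(2*M+N))" using l by simp
  have e3: "((A+B)*(-(N*(2*M+N)))) * (M+N)^2 = (l*N^2*(2*M+N))^2" using eC by algebra
  have s3: "sq ((A+B)*(-(N*(2*M+N))))" using sq_cancel[of "(A+B)*(-(N*(2*M+N)))" "M+N"] e3 MN by simp
  have n1: "(M-N)*(M+N) \<noteq> 0" using eA A0 by auto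
  have n2: "M*(M+2*N) \<noteq> 0"
  proof
    assume "M*(M+2*N) = 0"
    then have "B*(M+N)^2 = 0" using eB by (auto simp: power3_eq_cube)
    then show False using B0 MN by simp
  qed
  have n3: "N*(2*M+N) \<noteq> 0"
  proof
    assume "N*(2*M+N) = 0"
    then have "(A+B)*(M+N)^2 = 0" using eC by (auto simp: power3_eq_cube)
    then show False using AB0 MN by simp
  qed
  show ?thesis using s1 s2 s3 n1 n2 n3 by blast
qed

lemma uvw_to_mn:
  fixes A B x u v w :: rat
  assumes A: "A > 0" and B: "B > 0" and hu: "x - 0 = u^2" and hv: "x - A = v^2" and hw: "x - (-B) = w^2"
    and h: "u*v + u*w + v*w = 0"
  shows "\<exists>m n::int. coprime m n \<and> sq (A*of_int((m-n)*(m+n))) \<and> sq (B*of_int(-(m*(m+2*n))))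
     \<and> sq ((A+B)*of_int(-(n*(2*m+n))))
     \<and> (m-n)*(m+n) \<noteq> 0 \<and> m*(m+2*n) \<noteq> 0 \<and> n*(2*m+n) \<noteq> 0"
proof -
  have hA: "A = u^2 - v^2" using hu hv by simp
  have hB: "B = w^2 - u^2" using hu hw by simp
  have u: "u \<noteq> 0"
  proof
    assume "u = 0"
    then have "v^2 = - A" using hu hv by simp
    moreover have "v^2 \<ge> 0" by simp
    ultimately show False using A by simp
  qed
  have v: "v \<noteq> 0"
  proof
    assume "v = 0"
    then have "u*w = 0" using h by simp
    then have "w = 0" using u by simp
    then have "A = -B" using hv hw \<open>v = 0\<close> by simp
    then show False using A B by simp
  qed
  have uv: "u + v \<noteq> 0"
  proof
    assume "u + v = 0"
    then have "v = -u" by simp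
    then have "u*v + w*(u+v) = -(u^2)" by (simp add: power2_eq_square)
    then have "u^2 = 0" using h by (simp add: algebra_simps)
    then show False using u by simp
  qed
  obtain m n where mn: "u/v = Fract m n" "n > 0" "coprime m n" by (cases "u/v") auto
  define l where "l = v / of_int n"
  have l: "l \<noteq> 0" using v mn(2) unfolding l_def by simp
  have vN: "v = l * of_int n" using mn(2) unfolding l_def by simp
  have uM: "u = l * of_int m"
  proof -
    have "u = v * (of_int m / of_int n)" using mn(1) v by (simp add: Fract_of_int_quotient field_simps)
    then show ?thesis unfolding l_def by simp
  qed
  have "u + v = l*(of_int m + of_int n)" using uM vN by (simp add: distrib_left)
  then have MN: "(of_int m :: rat) + of_int n \<noteq> 0" using uv by auto
  have A0: "A \<noteq> 0" and B0: "B \<noteq> 0" and AB0: "A + B \<noteq> 0" using A B by auto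
  note R = rat_part[OF hA hB h uM vN l MN A0 B0 AB0]
  have c1: "(of_int ((m-n)*(m+n)) :: rat) = (of_int m-of_int n)*(of_int m+of_int n)" by simp
  have c2: "(of_int (-(m*(m+2*n))) :: rat) = -(of_int m*(of_int m+2*of_int n))" by simp
  have c3: "(of_int (-(n*(2*m+n))) :: rat) = -(of_int n*(2*of_int m+of_int n))" by simp
  have d1: "(of_int ((m-n)*(m+n)) :: rat) = (of_int m-of_int n)*(of_int m+of_int n)" by simp
  have d2: "(of_int (m*(m+2*n)) :: rat) = of_int m*(of_int m+2*of_int n)" by simp
  have d3: "(of_int (n*(2*m+n)) :: rat) = of_int n*(2*of_int m+of_int n)" by simp
  have z1: "(m-n)*(m+n) \<noteq> 0"
  proof
    assume "(m-n)*(m+n) = 0"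
    then have "(of_int ((m-n)*(m+n)) :: rat) = 0" by (metis of_int_0)
    then have "(of_int m-of_int n)*(of_int m+of_int n) = (0::rat)" using d1 by argo
    then show False using R by blast
  qed
  have z2: "m*(m+2*n) \<noteq> 0"
  proof
    assume "m*(m+2*n) = 0"
    then have "(of_int (m*(m+2*n)) :: rat) = 0" by (metis of_int_0)
    then have "of_int m*(of_int m+2*of_int n) = (0::rat)" using d2 by argo
    then show False using R by blast
  qed
  have z3: "n*(2*m+n) \<noteq> 0"
  proof
    assume "n*(2*m+n) = 0"
    then have "(of_int (n*(2*m+n)) :: rat) = 0" by (metis of_int_0)
    then have "of_int n*(2*of_int m+of_int n) = (0::rat)" using d3 by argo
    then show False using R by blast
  qed
  show ?thesis
    apply (rule exI[of _ m], rule exI[of _ n])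
    unfolding c1 c2 c3 using R mn(3) z1 z2 z3 by blast
qed


lemma sq_nonneg: "sq q \<Longrightarrow> q \<ge> 0" unfolding sq_def by auto

lemma sqf_int:
  fixes k :: nat and p :: int
  assumes sf: "squarefree k" and p: "prime p"
  shows "\<not> p^2 dvd int k"
proof
  assume h: "p^2 dvd int k"
  have p0: "p > 1" using p prime_gt_1_int by blast
  then have "p = int (nat p)" by simp
  then have "int ((nat p)^2) dvd int k" using h by (metis of_nat_power)
  then have "(nat p)^2 dvd k" by (simp only: of_nat_dvd_iff)
  then have "nat p dvd 1" using sf squarefreeD by blast
  then show False using p0 by simp
qed

lemma NT4:
  fixes r s k :: int
  assumes c: "coprime r s" and sf: "\<And>p. prime p \<Longrightarrow> \<not> p^2 dvd k" and k: "k > 0"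
    and sr: "s - r > 0" and s: "s > 0"
    and h1: "sq (of_int ((s-r)*k))" and h2: "sq (of_int ((2*s)*k))"
  shows "\<And>p. prime p \<Longrightarrow> p dvd k \<Longrightarrow> p = 2"
proof (rule ccontr)
  fix p :: int assume p: "prime p" and pk: "p dvd k" and p2: "p \<noteq> 2"
  have nu: "\<not> p dvd 1" using p by (meson not_prime_unit)
  have a: "p dvd s - r"
  proof (rule ccontr)
    assume "\<not> p dvd s - r"
    then have "p dvd 1" using key_odd[OF p pk sf[OF p], of "s-r" 1] h1 sr k by simp
    then show False using nu by simp
  qed
  have b: "p dvd 2*s"
  proof (rule ccontr)
    assume "\<not> p dvd 2*s"
    then have "p dvd 1" using key_odd[OF p pk sf[OF p], of "2*s" 1] h2 s k by simp
    then show False using nu by simp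
  qed
  have "\<not> p dvd 2" using primes_dvd_imp_eq[OF p, of 2] p2 by auto
  then have ps: "p dvd s" using b p prime_dvd_mult_iff by blast
  have "r = s - (s - r)" by simp
  then have "p dvd r" using a ps by (metis dvd_diff)
  then show False using cop_both[OF p c _ ps] by blast
qed

lemma NT3:
  fixes r s k m n :: int
  assumes c: "coprime r s" and sf: "\<And>p. prime p \<Longrightarrow> \<not> p^2 dvd k" and k: "k > 0"
    and sr: "s - r > 0" and sr2: "s + r > 0" and s: "s > 0"
    and cmn: "coprime m n"
    and z1: "(m-n)*(m+n) \<noteq> 0" and z2: "m*(m+2*n) \<noteq> 0" and z3: "n*(2*m+n) \<noteq> 0"
    and h1: "sq (of_int ((s-r)*k*((m-n)*(m+n))))"
    and h2: "sq (of_int ((s+r)*k*(-(m*(m+2*n)))))"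
    and h3: "sq (of_int ((2*s)*k*(-(n*(2*m+n)))))"
  shows "\<And>p. prime p \<Longrightarrow> p dvd k \<Longrightarrow> p = 2 \<or> p = 3"
proof -
  fix p :: int assume p: "prime p" and pk: "p dvd k"
  show "p = 2 \<or> p = 3"
  proof (cases "p = 2")
    case True then show ?thesis by simp
  next
    case p2: False
    have n2: "\<not> p dvd 2" using primes_dvd_imp_eq[OF p, of 2] p2 by auto
    have sq2: "p dvd 2*s \<Longrightarrow> p dvd s" using n2 p prime_dvd_mult_iff by blast
    have ex1: "\<not> (p dvd s - r \<and> p dvd s + r)"
    proof
      assume h: "p dvd s - r \<and> p dvd s + r"
      have "2*s = (s-r) + (s+r)" "2*r = (s+r) - (s-r)" by simp_all
      then have "p dvd 2*s" "p dvd 2*r" using h by (metis dvd_add dvd_diff)+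
      then have "p dvd s" "p dvd r" using n2 p prime_dvd_mult_iff by blast+
      then show False using cop_both[OF p c] by blast
    qed
    have ex2: "\<not> (p dvd s - r \<and> p dvd 2*s)"
    proof
      assume h: "p dvd s - r \<and> p dvd 2*s"
      then have ps: "p dvd s" using sq2 by blast
      have "r = s - (s - r)" by simp
      then have "p dvd r" using h ps by (metis dvd_diff)
      then show False using cop_both[OF p c _ ps] by blast
    qed
    have ex3: "\<not> (p dvd s + r \<and> p dvd 2*s)"
    proof
      assume h: "p dvd s + r \<and> p dvd 2*s"
      then have ps: "p dvd s" using sq2 by blast
      have "r = (s + r) - s" by simp
      then have "p dvd r" using h ps by (metis dvd_diff)
      then show False using cop_both[OF p c _ ps] by blast
    qed
    have W1: "p dvd (m-n)*(m+n)" if "\<not> p dvd s - r"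
      using key_odd[OF p pk sf[OF p] that] h1 sr k z1 by simp
    have W2: "p dvd m*(m+2*n)" if "\<not> p dvd s + r"
      using key_odd[OF p pk sf[OF p] that, of "-(m*(m+2*n))"] h2 sr2 k z2 by simp
    have W3: "p dvd n*(2*m+n)" if "\<not> p dvd 2*s"
      using key_odd[OF p pk sf[OF p] that, of "-(n*(2*m+n))"] h3 s k z3 by simp
    consider "\<not> p dvd s - r" "\<not> p dvd s + r" | "\<not> p dvd s - r" "\<not> p dvd 2*s" | "\<not> p dvd s + r" "\<not> p dvd 2*s"
      using ex1 ex2 ex3 by blast
    then show ?thesis
    proof cases
      case 1 then show ?thesis using L12[OF p cmn W1 W2] by simp
    next
      case 2 then show ?thesis using L13[OF p cmn W1 W3] by simp
    next
      case 3 then show ?thesis using L23[OF p cmn W2 W3] by simp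
    qed
  qed
qed

theorem theorem4p2:
  fixes r :: int and s k :: nat
  assumes "coprime r (int s)" and "\<bar>r\<bar> < int s"
    and "k > 0" and "squarefree k"
  shows "(odd k \<and> (theta_curve_has_order r (int s) (int k) 4 \<or> theta_curve_has_order r (int s) (int k) 8) \<longrightarrow> k = 1)
       \<and> (even k \<and> (theta_curve_has_order r (int s) (int k) 4 \<or> theta_curve_has_order r (int s) (int k) 8) \<longrightarrow> k = 2)
       \<and> (odd k \<and> (theta_curve_has_order r (int s) (int k) 3 \<or> theta_curve_has_order r (int s) (int k) 6) \<longrightarrow> k \<in> {1, 3})
       \<and> (even k \<and> (theta_curve_has_order r (int s) (int k) 3 \<or> theta_curve_has_order r (int s) (int k) 6) \<longrightarrow> k \<in> {2, 6})"
proof -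
  define S where "S = int s"
  define K where "K = int k"
  have K: "K > 0" using assms(3) unfolding K_def by simp
  have sr: "S - r > 0" and sr2: "S + r > 0" and S: "S > 0" using assms(2) unfolding S_def by auto
  have c: "coprime r S" using assms(1) unfolding S_def .
  have sf: "\<And>p. prime p \<Longrightarrow> \<not> p^2 dvd K" using sqf_int[OF assms(4)] unfolding K_def by blast
  define A :: rat where "A = of_int ((S - r) * K)"
  define B :: rat where "B = of_int ((S + r) * K)"
  have A: "A > 0" unfolding A_def using sr K by simp
  have B: "B > 0" unfolding B_def using sr2 K by simp
  have AB: "A + B = of_int ((2*S)*K)" unfolding A_def B_def by (simp add: algebra_simps)
  interpret E: ecurve "B - A" "-(A*B)" 0 0 A "-B"
    by unfold_locales (use A B in auto)
  have th: "\<And>N. theta_curve_has_order r S K N = has_point_of_order (B - A) (-(A*B)) 0 N"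
    unfolding theta_curve_has_order_def Let_def A_def B_def by simp
  have fin: "k dvd 6" if P: "\<And>p::int. prime p \<Longrightarrow> p dvd K \<Longrightarrow> p = 2 \<or> p = 3"
    using sqf_dvd6[OF assms(3,4)] P unfolding K_def by blast
  have K4: "k = 1 \<or> k = 2" if h: "theta_curve_has_order r S K 4 \<or> theta_curve_has_order r S K 8"
  proof -
    have "\<exists>P kk. has_order (B - A) (-(A*B)) 0 P (4*kk) \<and> kk > 0"
    proof -
      from h consider (a) P where "has_order (B - A) (-(A*B)) 0 P 4"
        | (b) P where "has_order (B - A) (-(A*B)) 0 P 8"
        unfolding th has_point_of_order_def by blast
      then show ?thesis
      proof cases
        case a
        then show ?thesis by (intro exI[of _ P] exI[of _ "1::nat"] conjI) simp_all
      next
        case b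
        then show ?thesis by (intro exI[of _ P] exI[of _ "2::nat"] conjI) simp_all
      qed
    qed
    then obtain P kk where P: "has_order (B - A) (-(A*B)) 0 P (4*kk)" "kk > 0" by blast
    obtain t where t: "t = 0 \<or> t = A \<or> t = -B" "sq (fe 0 A (-B) (Pt t 0))" "sq (fe A 0 (-B) (Pt t 0))"
       "sq (fe (-B) 0 A (Pt t 0))"
      using E.ord4k[OF P] by blast
    have tA: "t = A"
    proof -
      have "t \<noteq> 0"
      proof
        assume "t = 0"
        then have "sq (-(A*B))" using t(2) A by (simp add: fe_def)
        moreover have "A*B > 0" using A B by simp
        ultimately show False using sq_nonneg[of "-(A*B)"] by simp
      qed
      moreover have "t \<noteq> -B"
      proof
        assume "t = -B"
        then have "sq (-B)" using t(2) B by (simp add: fe_def)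
        then show False using sq_nonneg[of "-B"] B by simp
      qed
      ultimately show ?thesis using t(1) by blast
    qed
    have "sq A" using t(2) tA A by (simp add: fe_def)
    then have s1: "sq (of_int ((S-r)*K))" unfolding A_def .
    have "sq (A + B)" using t(4) tA A B by (simp add: fe_def)
    then have s2: "sq (of_int ((2*S)*K))" using AB by simp
    have P2: "\<And>p. prime p \<Longrightarrow> p dvd K \<Longrightarrow> p = 2" by (rule NT4[OF c sf K sr S s1 s2])
    then have "k dvd 6" using fin by blast
    then have k4: "k = 1 \<or> k = 2 \<or> k = 3 \<or> k = 6" by (rule dvd6_cases)
    have "\<not> (3::int) dvd K" using P2[of 3] by auto
    then show ?thesis using k4 unfolding K_def by auto
  qed
  have K3: "k = 1 \<or> k = 2 \<or> k = 3 \<or> k = 6"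
    if h: "theta_curve_has_order r S K 3 \<or> theta_curve_has_order r S K 6"
  proof -
    obtain x u v w where X: "x - 0 = u^2" "x - A = v^2" "x - -B = w^2" "u*v + u*w + v*w = 0"
      using h E.ord3 E.ord6 unfolding th has_point_of_order_def by blast
    obtain m n where mn: "coprime m n" "sq (A*of_int((m-n)*(m+n)))" "sq (B*of_int(-(m*(m+2*n))))"
      "sq ((A+B)*of_int(-(n*(2*m+n))))" "(m-n)*(m+n) \<noteq> 0" "m*(m+2*n) \<noteq> 0" "n*(2*m+n) \<noteq> 0"
      using uvw_to_mn[OF A B X] by blast
    have h1: "sq (of_int ((S-r)*K*((m-n)*(m+n))))" using mn(2) unfolding A_def by simp
    have h2: "sq (of_int ((S+r)*K*(-(m*(m+2*n)))))" using mn(3) unfolding B_def by simp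
    have h3: "sq (of_int ((2*S)*K*(-(n*(2*m+n)))))" using mn(4) unfolding AB by simp
    have "\<And>p. prime p \<Longrightarrow> p dvd K \<Longrightarrow> p = 2 \<or> p = 3"
      by (rule NT3[OF c sf K sr sr2 S mn(1) mn(5) mn(6) mn(7) h1 h2 h3])
    then have "k dvd 6" using fin by blast
    then show ?thesis by (rule dvd6_cases)
  qed
  show ?thesis using K4 K3 unfolding S_def K_def by auto
qed


end
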